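(* Let $T$ be a rooted binary phylogenetic tree with root $\rho$ of out-degree 2 and children $\rho_1,\rho_2$, and let $\dot T_1,\dot T_2$ be as defined in the context. Under the $N_r$ model (any $r\ge2$), $$RA_\varphi(T)=\tfrac12\big(RA_\varphi(\dot T_1)+RA_\varphi(\dot T_2)\big).$$
   Context: A rooted binary phylogenetic tree is a finite tree with a distinguished root vertex $\rho$, all edges directed away from $\rho$, in which $\rho$ has out-degree 2 or 1 (in the latter case the edge at $\rho$ is the stem edge), and every other vertex has in-degree 1 and out-degree 0 or 2; out-degree-0 vertices are leaves. Under the Neyman $r$-state model $N_r$ ($r\ge2$) on a state set of size $r$, each edge $e$ carries a substitution probability $p_e\in[0,\frac{r-1}{r}]$; given the root state, states propagate independently along edges: for an edge $(u,v)$, $F(v)=F(u)$ with probability $1-p_e$, and otherwise $F(v)$ is uniform among the $r-1$ other states; $f$ is the restriction of $F$ to the leaves. The coin-toss method $\varphi$: leaves get their states $f(x)$; proceeding towards the root, a vertex whose two children have equal states gets that state, otherwise one of the two states chosen by an independent fair coin toss; a vertex with a single child gets its child's state. $RA_\varphi$ is the probability that the state assigned to the root equals the true root state. For $i=1,2$, $T_i$ is the maximal subtree of $T$ rooted at $\rho_i$, and $\dot T_i$ is the tree consisting of $T_i$ together with the edge $(\rho,\rho_i)$ (with its substitution probability from $T$) as stem edge, rooted at $\rho$. *)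

theory Defs
  imports "HOL-Probability.Probability"
begin

text \<open>Subtrees below a non-root vertex: a leaf, or an internal vertex with exactly two
 child edges, each labelled by its substitution probability.\<close>
datatype btree = Leaf | Node real btree real btree

text \<open>Rooted binary phylogenetic trees: the root has out-degree 2 (Root2) or
 out-degree 1 (Stem: the root together with its stem edge).\<close>
datatype rtree = Root2 real btree real btree | Stem real btree

definition nr_edge :: "nat \<Rightarrow> real \<Rightarrow> nat \<Rightarrow> nat pmf" where
  "nr_edge r p s = do { b \<leftarrow> bernoulli_pmf p;
                        if b then pmf_of_set ({0..<r} - {s}) else return_pmf s }"

definition coin :: "nat \<Rightarrow> nat \<Rightarrow> nat pmf" where
  "coin a b = (if a = b then return_pmf a
               else do { c \<leftarrow> bernoulli_pmf (1/2); return_pmf (if c then a else b) })"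

text \<open>Distribution of the state assigned by the coin-toss method to a vertex,
 given the true state s of that vertex (leaf states evolve along edges under N_r,
 independently on different edges; coin tosses are independent).\<close>
fun ct :: "nat \<Rightarrow> btree \<Rightarrow> nat \<Rightarrow> nat pmf" where
  "ct r Leaf s = return_pmf s"
| "ct r (Node p1 t1 p2 t2) s = do {
      s1 \<leftarrow> nr_edge r p1 s; s2 \<leftarrow> nr_edge r p2 s;
      a \<leftarrow> ct r t1 s1; b \<leftarrow> ct r t2 s2; coin a b }"

fun ct_root :: "nat \<Rightarrow> rtree \<Rightarrow> nat \<Rightarrow> nat pmf" where
  "ct_root r (Root2 p1 t1 p2 t2) s = ct r (Node p1 t1 p2 t2) s"
| "ct_root r (Stem p t) s = do { s1 \<leftarrow> nr_edge r p s; ct r t s1 }"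

text \<open>Root state uniform on the r states (stationary distribution of N_r).\<close>
definition RA :: "nat \<Rightarrow> rtree \<Rightarrow> real" where
  "RA r T = measure_pmf.prob
     (do { s \<leftarrow> pmf_of_set {0..<r}; a \<leftarrow> ct_root r T s; return_pmf (a = s) }) {True}"

fun valid_bt :: "nat \<Rightarrow> btree \<Rightarrow> bool" where
  "valid_bt r Leaf = True"
| "valid_bt r (Node p1 t1 p2 t2) =
     (0 \<le> p1 \<and> p1 \<le> (real r - 1) / real r \<and> 0 \<le> p2 \<and> p2 \<le> (real r - 1) / real r
      \<and> valid_bt r t1 \<and> valid_bt r t2)"

fun valid_rt :: "nat \<Rightarrow> rtree \<Rightarrow> bool" where
  "valid_rt r (Root2 p1 t1 p2 t2) = valid_bt r (Node p1 t1 p2 t2)"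
| "valid_rt r (Stem p t) = (0 \<le> p \<and> p \<le> (real r - 1) / real r \<and> valid_bt r t)"

end

theory Submission
  imports Defs
begin

abbreviation C :: "bool pmf" where "C \<equiv> bernoulli_pmf (1/2)"

lemma coin_alt: "coin a b = bind_pmf C (\<lambda>c. return_pmf (if c then a else b))"
  by (cases "a = b") (simp_all add: coin_def cong: if_cong)

lemma coin_fun: "coin = (\<lambda>a b. bind_pmf C (\<lambda>c. return_pmf (if c then a else b)))"
  using coin_alt by (intro ext) simp

lemma node_alt:
  "ct r (Node p1 t1 p2 t2) s =
     bind_pmf C (\<lambda>c. if c then bind_pmf (nr_edge r p1 s) (ct r t1)
                          else bind_pmf (nr_edge r p2 s) (ct r t2))"
proof -
  define X1 where "X1 = nr_edge r p1 s"
  define X2 where "X2 = nr_edge r p2 s"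
  have "ct r (Node p1 t1 p2 t2) s =
     bind_pmf X1 (\<lambda>s1. bind_pmf X2 (\<lambda>s2. bind_pmf (ct r t1 s1) (\<lambda>a. bind_pmf (ct r t2 s2)
        (\<lambda>b. bind_pmf C (\<lambda>c. return_pmf (if c then a else b))))))"
    unfolding X1_def X2_def ct.simps coin_fun by simp
  also have "\<dots> = bind_pmf X1 (\<lambda>s1. bind_pmf X2 (\<lambda>s2. bind_pmf (ct r t1 s1) (\<lambda>a. 
        bind_pmf C (\<lambda>c. bind_pmf (ct r t2 s2) (\<lambda>b. return_pmf (if c then a else b))))))"
    by (simp add: bind_commute_pmf[of "ct r t2 _" C])
  also have "\<dots> = bind_pmf X1 (\<lambda>s1. bind_pmf X2 (\<lambda>s2. 
        bind_pmf C (\<lambda>c. bind_pmf (ct r t1 s1) (\<lambda>a. bind_pmf (ct r t2 s2) (\<lambda>b. return_pmf (if c then a else b))))))"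
    by (simp add: bind_commute_pmf[of "ct r t1 _" C])
  also have "\<dots> = bind_pmf X1 (\<lambda>s1. 
        bind_pmf C (\<lambda>c. bind_pmf X2 (\<lambda>s2. bind_pmf (ct r t1 s1) (\<lambda>a. bind_pmf (ct r t2 s2) (\<lambda>b. return_pmf (if c then a else b))))))"
    by (simp add: bind_commute_pmf[of X2 C])
  also have "\<dots> = 
        bind_pmf C (\<lambda>c. bind_pmf X1 (\<lambda>s1. bind_pmf X2 (\<lambda>s2. bind_pmf (ct r t1 s1) (\<lambda>a. bind_pmf (ct r t2 s2) (\<lambda>b. return_pmf (if c then a else b))))))"
    by (simp add: bind_commute_pmf[of X1 C])
  also have "\<dots> = bind_pmf C (\<lambda>c. if c then bind_pmf X1 (ct r t1) else bind_pmf X2 (ct r t2))"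
  proof (rule bind_pmf_cong[OF refl])
    fix c :: bool
    show "bind_pmf X1 (\<lambda>s1. bind_pmf X2 (\<lambda>s2. bind_pmf (ct r t1 s1) (\<lambda>a. bind_pmf (ct r t2 s2) (\<lambda>b. return_pmf (if c then a else b))))) =
      (if c then bind_pmf X1 (ct r t1) else bind_pmf X2 (ct r t2))"
    proof (cases c)
      case True
      then show ?thesis by (simp add: bind_return_pmf')
    next
      case False
      have "bind_pmf X1 (\<lambda>s1. bind_pmf X2 (\<lambda>s2. bind_pmf (ct r t1 s1) (\<lambda>a. bind_pmf (ct r t2 s2) (\<lambda>b. return_pmf b)))) =
         bind_pmf X1 (\<lambda>s1. bind_pmf X2 (\<lambda>s2. ct r t2 s2))"
        by (simp add: bind_return_pmf')
      then show ?thesis using False by simp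
    qed
  qed
  finally show ?thesis unfolding X1_def X2_def .
qed

theorem theorem3:
  fixes r :: nat and p1 p2 :: real and t1 t2 :: btree
  assumes "r \<ge> 2" and "valid_rt r (Root2 p1 t1 p2 t2)"
  shows "RA r (Root2 p1 t1 p2 t2) = (RA r (Stem p1 t1) + RA r (Stem p2 t2)) / 2"
proof -
  define U where "U = pmf_of_set {0..<r}"
  define D where "D = (\<lambda>c. bind_pmf U (\<lambda>s. bind_pmf (if c then bind_pmf (nr_edge r p1 s) (ct r t1)
                          else bind_pmf (nr_edge r p2 s) (ct r t2)) (\<lambda>a. return_pmf (a = s))))"
  have D1: "D True = do { s \<leftarrow> U; a \<leftarrow> ct_root r (Stem p1 t1) s; return_pmf (a = s) }"
    by (simp add: D_def)
  have D2: "D False = do { s \<leftarrow> U; a \<leftarrow> ct_root r (Stem p2 t2) s; return_pmf (a = s) }"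
    by (simp add: D_def)
  have "do { s \<leftarrow> U; a \<leftarrow> ct_root r (Root2 p1 t1 p2 t2) s; return_pmf (a = s) } = bind_pmf C D"
    unfolding D_def ct_root.simps node_alt bind_assoc_pmf
    by (rule bind_commute_pmf)
  then have "RA r (Root2 p1 t1 p2 t2) = measure_pmf.prob (bind_pmf C D) {True}"
    by (simp add: RA_def U_def)
  also have "\<dots> = pmf (bind_pmf C D) True" by (simp add: measure_pmf_single)
  also have "\<dots> = (pmf (D True) True + pmf (D False) True) / 2"
    by (simp add: pmf_bind)
  also have "\<dots> = (RA r (Stem p1 t1) + RA r (Stem p2 t2)) / 2"
    by (simp add: RA_def D1 D2 U_def measure_pmf_single)
  finally show ?thesis .
qed

end
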